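(* Let $K$ be a field, $I\subset R=K[x_1,\ldots,x_n]$ a monomial ideal and $W$ a weight over $R$. Then $I$ has the copersistence property if and only if the weighted ideal $I_W$ has the copersistence property.
   Context: An ideal $I$ in a commutative Noetherian ring $R$ has the copersistence property if $\mathrm{Ass}_R(R/I^k)\supseteq\mathrm{Ass}_R(R/I^{k+1})$ for all $k\ge1$. A weight over $R=K[x_1,\ldots,x_n]$ is a function $W:\{x_1,\ldots,x_n\}\to\mathbb{N}$ (positive integers); write $w_i=W(x_i)$. For a monomial ideal $I$, the weighted ideal $I_W$ is the ideal generated by $\{h(u): u \text{ a minimal monomial generator of } I\}$, where $h:R\to R$ is the $K$-algebra homomorphism with $h(x_i)=x_i^{w_i}$. *)

theory Defs
  imports Main "HOL-Library.Poly_Mapping"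
begin

definition is_ideal :: "'a::comm_ring_1 set \<Rightarrow> bool" where
  "is_ideal I \<longleftrightarrow> 0 \<in> I \<and> (\<forall>a\<in>I. \<forall>b\<in>I. a + b \<in> I) \<and> (\<forall>r. \<forall>a\<in>I. r * a \<in> I)"

definition ideal_gen :: "'a::comm_ring_1 set \<Rightarrow> 'a set" where
  "ideal_gen S = \<Inter>{J. is_ideal J \<and> S \<subseteq> J}"

definition ideal_prod :: "'a::comm_ring_1 set \<Rightarrow> 'a set \<Rightarrow> 'a set" where
  "ideal_prod I J = ideal_gen {a * b | a b. a \<in> I \<and> b \<in> J}"

primrec ideal_pow :: "'a::comm_ring_1 set \<Rightarrow> nat \<Rightarrow> 'a set" where
  "ideal_pow I 0 = UNIV"
| "ideal_pow I (Suc k) = ideal_prod (ideal_pow I k) I"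

definition is_prime_ideal :: "'a::comm_ring_1 set \<Rightarrow> bool" where
  "is_prime_ideal P \<longleftrightarrow> is_ideal P \<and> P \<noteq> UNIV \<and> (\<forall>a b. a * b \<in> P \<longrightarrow> a \<in> P \<or> b \<in> P)"

text \<open>Ass_R(R/J): prime ideals that are the annihilator (J : f) of some element f + J of R/J.\<close>
definition Ass :: "'a::comm_ring_1 set \<Rightarrow> 'a set set" where
  "Ass J = {P. is_prime_ideal P \<and> (\<exists>f. P = {r. r * f \<in> J})}"

definition copersistent :: "'a::comm_ring_1 set \<Rightarrow> bool" where
  "copersistent I \<longleftrightarrow> (\<forall>k\<ge>1. Ass (ideal_pow I (k + 1)) \<subseteq> Ass (ideal_pow I k))"

type_synonym ('v, 'k) mpoly = "('v \<Rightarrow>\<^sub>0 nat) \<Rightarrow>\<^sub>0 'k"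

definition monomials :: "('v, 'k::field) mpoly set" where
  "monomials = {Poly_Mapping.single a 1 | a. True}"

definition is_monomial_ideal :: "('v, 'k::field) mpoly set \<Rightarrow> bool" where
  "is_monomial_ideal I \<longleftrightarrow> is_ideal I \<and> I = ideal_gen (I \<inter> monomials)"

definition min_mon_gens :: "('v, 'k::field) mpoly set \<Rightarrow> ('v \<Rightarrow>\<^sub>0 nat) set" where
  "min_mon_gens I = {a. Poly_Mapping.single a 1 \<in> I \<and>
     (\<forall>b. Poly_Mapping.single b 1 \<in> I \<and> (\<forall>v. Poly_Mapping.lookup b v \<le> Poly_Mapping.lookup a v) \<longrightarrow> b = a)}"

text \<open>Weight h: x_v \<mapsto> x_v^(w v) acting on exponent vectors.\<close>
definition weight_exp :: "('v \<Rightarrow> nat) \<Rightarrow> ('v \<Rightarrow>\<^sub>0 nat) \<Rightarrow> ('v \<Rightarrow>\<^sub>0 nat)" where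
  "weight_exp w a = Abs_poly_mapping (\<lambda>v. w v * Poly_Mapping.lookup a v)"

definition weighted_ideal :: "('v \<Rightarrow> nat) \<Rightarrow> ('v, 'k::field) mpoly set \<Rightarrow> ('v, 'k) mpoly set" where
  "weighted_ideal w I = ideal_gen ((\<lambda>a. Poly_Mapping.single (weight_exp w a) 1) ` min_mon_gens I)"

end

theory Submission
  imports Defs
begin

lemma ideal_gen_ideal: "is_ideal (ideal_gen S)"
  unfolding ideal_gen_def is_ideal_def by auto

lemma ideal_gen_sub: "S \<subseteq> ideal_gen S"
  unfolding ideal_gen_def by auto

lemma ideal_gen_least: "is_ideal J \<Longrightarrow> S \<subseteq> J \<Longrightarrow> ideal_gen S \<subseteq> J"
  unfolding ideal_gen_def by auto

lemma ideal_zero: "is_ideal I \<Longrightarrow> 0 \<in> I"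
  unfolding is_ideal_def by auto

lemma ideal_add: "is_ideal I \<Longrightarrow> a \<in> I \<Longrightarrow> b \<in> I \<Longrightarrow> a + b \<in> I"
  unfolding is_ideal_def by auto

lemma ideal_mult: "is_ideal I \<Longrightarrow> a \<in> I \<Longrightarrow> r * a \<in> I"
  unfolding is_ideal_def by auto

lemma ideal_mult2: "is_ideal I \<Longrightarrow> a \<in> I \<Longrightarrow> a * r \<in> I"
  unfolding is_ideal_def by (metis mult.commute)

lemma ideal_uminus: "is_ideal I \<Longrightarrow> a \<in> I \<Longrightarrow> - a \<in> I"
  using ideal_mult[of I a "-1"] by simp

lemma ideal_diff: "is_ideal I \<Longrightarrow> a \<in> I \<Longrightarrow> b \<in> I \<Longrightarrow> a - b \<in> I"
  using ideal_add[of I a "-b"] ideal_uminus[of I b] by simp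

lemma ideal_sum:
  assumes "is_ideal I" "finite S" "\<And>x. x \<in> S \<Longrightarrow> f x \<in> I"
  shows "sum f S \<in> I"
  using assms(2,3) by (induction S rule: finite_induct) (auto intro: ideal_zero[OF assms(1)] ideal_add[OF assms(1)])

lemma ideal_gen_mono: "S \<subseteq> T \<Longrightarrow> ideal_gen S \<subseteq> ideal_gen T"
  by (meson ideal_gen_ideal ideal_gen_least ideal_gen_sub order_trans)

abbreviation X :: "('v \<Rightarrow>\<^sub>0 nat) \<Rightarrow> ('v, 'k::field) mpoly" where
  "X a \<equiv> Poly_Mapping.single a 1"

definition mon :: "('v \<Rightarrow>\<^sub>0 nat) set \<Rightarrow> ('v, 'k::field) mpoly set" where
  "mon E = {f. Poly_Mapping.keys f \<subseteq> E}"

definition upcl :: "('v \<Rightarrow>\<^sub>0 nat) set \<Rightarrow> bool" where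
  "upcl E \<longleftrightarrow> (\<forall>a\<in>E. \<forall>c. a + c \<in> E)"

definition up :: "('v \<Rightarrow>\<^sub>0 nat) set \<Rightarrow> ('v \<Rightarrow>\<^sub>0 nat) set" where
  "up S = {s + c | s c. s \<in> S}"

definition psum :: "('v \<Rightarrow>\<^sub>0 nat) set \<Rightarrow> ('v \<Rightarrow>\<^sub>0 nat) set \<Rightarrow> ('v \<Rightarrow>\<^sub>0 nat) set" where
  "psum E F = {a + b | a b. a \<in> E \<and> b \<in> F}"

lemma upcl_up: "upcl (up S)"
  unfolding upcl_def up_def
proof (safe)
  fix s c c' assume "s \<in> S"
  then show "\<exists>s' c''. s + c + c' = s' + c'' \<and> s' \<in> S"
    by (intro exI[of _ s] exI[of _ "c + c'"]) (simp add: add.assoc)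
qed

lemma up_upcl: "upcl E \<Longrightarrow> up E = E"
  unfolding upcl_def up_def
proof (safe)
  fix x assume "x \<in> E"
  then show "\<exists>s c. x = s + c \<and> s \<in> E" by (intro exI[of _ x] exI[of _ 0]) simp
qed auto

lemma upcl_psum: "upcl F \<Longrightarrow> upcl (psum E F)"
  unfolding upcl_def psum_def
proof (safe)
  fix a b c assume "\<forall>a\<in>F. \<forall>c. a + c \<in> F" "a \<in> E" "b \<in> F"
  then show "\<exists>a' b'. a + b + c = a' + b' \<and> a' \<in> E \<and> b' \<in> F"
    by (intro exI[of _ a] exI[of _ "b + c"]) (simp add: add.assoc)
qed

lemma keys_mult_sub: "Poly_Mapping.keys (f * g) \<subseteq> psum (Poly_Mapping.keys f) (Poly_Mapping.keys g)"
  unfolding psum_def using keys_mult by blast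

lemma mon_ideal: "upcl E \<Longrightarrow> is_ideal (mon E :: ('v, 'k::field) mpoly set)"
  unfolding is_ideal_def mon_def
proof (intro conjI ballI allI)
  assume u: "upcl E"
  show "(0::('v, 'k) mpoly) \<in> {f. Poly_Mapping.keys f \<subseteq> E}" by simp
  fix a b :: "('v, 'k) mpoly"
  assume "a \<in> {f. Poly_Mapping.keys f \<subseteq> E}" "b \<in> {f. Poly_Mapping.keys f \<subseteq> E}"
  then show "a + b \<in> {f. Poly_Mapping.keys f \<subseteq> E}" using keys_add[of a b] by auto
next
  fix r a :: "('v, 'k) mpoly"
  assume u: "upcl E" and "a \<in> {f. Poly_Mapping.keys f \<subseteq> E}"
  show "r * a \<in> {f. Poly_Mapping.keys f \<subseteq> E}"
  proof (rule CollectI, rule subsetI)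
    fix x assume "x \<in> Poly_Mapping.keys (r * a)"
    then obtain p q where "p \<in> Poly_Mapping.keys r" "q \<in> Poly_Mapping.keys a" "x = p + q"
      using keys_mult[of r a] by blast
    then have "q \<in> E" using \<open>a \<in> _\<close> by auto
    then have "q + p \<in> E" using u unfolding upcl_def by blast
    then show "x \<in> E" using \<open>x = p + q\<close> by (simp add: add.commute)
  qed
qed

lemma keys_X [simp]: "Poly_Mapping.keys (X a :: ('v, 'k::field) mpoly) = {a}"
  by simp

lemma poly_sum_single:
  "(f::('a \<Rightarrow>\<^sub>0 'b::comm_monoid_add)) = (\<Sum>a\<in>Poly_Mapping.keys f. Poly_Mapping.single a (Poly_Mapping.lookup f a))"
proof (rule poly_mapping_eqI)
  fix k
  show "Poly_Mapping.lookup f k = Poly_Mapping.lookup (\<Sum>a\<in>Poly_Mapping.keys f. Poly_Mapping.single a (Poly_Mapping.lookup f a)) k"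
  proof -
    have "Poly_Mapping.lookup (\<Sum>a\<in>Poly_Mapping.keys f. Poly_Mapping.single a (Poly_Mapping.lookup f a)) k
       = (\<Sum>a\<in>Poly_Mapping.keys f. (if a = k then Poly_Mapping.lookup f a else 0))"
      unfolding lookup_sum lookup_single when_def by (intro sum.cong) auto
    also have "\<dots> = Poly_Mapping.lookup f k"
      by (cases "k \<in> Poly_Mapping.keys f") (simp_all add: sum.delta' in_keys_iff)
    finally show ?thesis by simp
  qed
qed

lemma ideal_from_monomials:
  fixes f :: "('v, 'k::field) mpoly"
  assumes "is_ideal I" "\<And>a. a \<in> Poly_Mapping.keys f \<Longrightarrow> X a \<in> I"
  shows "f \<in> I"
proof -
  have "(\<Sum>a\<in>Poly_Mapping.keys f. Poly_Mapping.single a (Poly_Mapping.lookup f a)) \<in> I"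
  proof (rule ideal_sum[OF assms(1)])
    fix a assume "a \<in> Poly_Mapping.keys f"
    have "Poly_Mapping.single a (Poly_Mapping.lookup f a) = Poly_Mapping.single 0 (Poly_Mapping.lookup f a) * (X a :: ('v, 'k) mpoly)"
      by (simp add: mult_single)
    then show "Poly_Mapping.single a (Poly_Mapping.lookup f a) \<in> I"
      using ideal_mult[OF assms(1) assms(2)[OF \<open>a \<in> _\<close>]] by simp
  qed simp
  then show ?thesis by (simp add: poly_sum_single[of f, symmetric])
qed

lemma ideal_gen_X: "ideal_gen (X ` S) = (mon (up S) :: ('v, 'k::field) mpoly set)"
proof
  show "ideal_gen (X ` S) \<subseteq> (mon (up S) :: ('v, 'k) mpoly set)"
  proof (rule ideal_gen_least[OF mon_ideal[OF upcl_up]], safe)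
    fix s assume "s \<in> S"
    have "s \<in> up S" unfolding up_def using \<open>s \<in> S\<close> by (intro CollectI exI[of _ s] exI[of _ 0]) simp
    then show "X s \<in> (mon (up S) :: ('v, 'k) mpoly set)" by (simp add: mon_def)
  qed
  show "(mon (up S) :: ('v, 'k) mpoly set) \<subseteq> ideal_gen (X ` S)"
  proof
    fix f :: "('v, 'k) mpoly" assume f: "f \<in> mon (up S)"
    show "f \<in> ideal_gen (X ` S)"
    proof (rule ideal_from_monomials[OF ideal_gen_ideal])
      fix a assume "a \<in> Poly_Mapping.keys f"
      then have "a \<in> up S" using f unfolding mon_def by blast
      then obtain s c where "s \<in> S" "a = s + c" unfolding up_def by blast
      have "X c * (X s :: ('v, 'k) mpoly) = X (c + s)" by (simp add: mult_single)
      also have "c + s = a" using \<open>a = s + c\<close> by (simp add: add.commute)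
      finally have e: "X a = X c * (X s :: ('v, 'k) mpoly)" by simp
      have "(X s :: ('v, 'k) mpoly) \<in> ideal_gen (X ` S)" using ideal_gen_sub[of "X ` S"] \<open>s \<in> S\<close> by blast
      then have "X c * (X s :: ('v, 'k) mpoly) \<in> ideal_gen (X ` S)" by (rule ideal_mult[OF ideal_gen_ideal])
      then show "(X a :: ('v, 'k) mpoly) \<in> ideal_gen (X ` S)" by (simp only: e)
    qed
  qed
qed
lemma mon_ideal_gen: "upcl E \<Longrightarrow> (mon E :: ('v, 'k::field) mpoly set) = ideal_gen (X ` E)"
  by (simp add: ideal_gen_X up_upcl)

lemma X_add_mem:
  "a \<in> E \<Longrightarrow> b \<in> F \<Longrightarrow> (X (a + b) :: ('v, 'k::field) mpoly) \<in> {p * q | p q. p \<in> mon E \<and> q \<in> mon F}"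
  by (intro CollectI exI[of _ "X a"] exI[of _ "X b"]) (simp add: mult_single mon_def)

lemma ideal_prod_mon:
  assumes "upcl E" "upcl F"
  shows "ideal_prod (mon E) (mon F) = (mon (psum E F) :: ('v, 'k::field) mpoly set)"
proof
  show "ideal_prod (mon E) (mon F) \<subseteq> (mon (psum E F) :: ('v, 'k) mpoly set)"
    unfolding ideal_prod_def
  proof (rule ideal_gen_least[OF mon_ideal[OF upcl_psum[OF assms(2)]]], safe)
    fix a b :: "('v, 'k) mpoly" assume "a \<in> mon E" "b \<in> mon F"
    then show "a * b \<in> mon (psum E F)"
      using keys_mult_sub[of a b] unfolding mon_def psum_def by blast
  qed
  have "(mon (psum E F) :: ('v, 'k) mpoly set) = ideal_gen (X ` psum E F)"
    using mon_ideal_gen[OF upcl_psum[OF assms(2)]] by blast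
  also have "\<dots> \<subseteq> ideal_prod (mon E) (mon F)"
    unfolding ideal_prod_def
  proof (rule ideal_gen_mono, rule image_subsetI)
    fix x assume "x \<in> psum E F"
    then show "(X x :: ('v, 'k) mpoly) \<in> {a * b |a b. a \<in> mon E \<and> b \<in> mon F}"
      using X_add_mem unfolding psum_def by blast
  qed
  finally show "(mon (psum E F) :: ('v, 'k) mpoly set) \<subseteq> ideal_prod (mon E) (mon F)" .
qed

subsection \<open>An extremal term of a product\<close>

lemma exists_order_emb:
  "\<exists>\<psi> :: ('v::finite \<Rightarrow>\<^sub>0 nat) \<Rightarrow> (nat \<Rightarrow>\<^sub>0 nat). inj \<psi> \<and> (\<forall>a b. \<psi> (a + b) = \<psi> a + \<psi> b)"
proof -
  obtain \<iota> :: "'v \<Rightarrow> nat" and n where "\<iota> ` UNIV = {i. i < n}" "inj_on \<iota> UNIV"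
    using finite_imp_inj_to_nat_seg[of "UNIV :: 'v set"] by auto
  then have inj: "inj \<iota>" by simp
  define F where "F a = (\<lambda>m. if m \<in> range \<iota> then Poly_Mapping.lookup a (inv \<iota> m) else 0)"
    for a :: "'v \<Rightarrow>\<^sub>0 nat"
  define \<psi> where "\<psi> a = Abs_poly_mapping (F a)" for a
  have fin: "finite {m. F a m \<noteq> 0}" for a
    by (rule finite_subset[of _ "range \<iota>"]) (auto simp: F_def)
  have lk: "Poly_Mapping.lookup (\<psi> a) m = F a m" for a m
    unfolding \<psi>_def using fin by simp
  have lk2: "Poly_Mapping.lookup (\<psi> a) (\<iota> v) = Poly_Mapping.lookup a v" for a v
    unfolding lk F_def using inj by simp
  have "inj \<psi>"
  proof (rule injI)
    fix a b assume "\<psi> a = \<psi> b"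
    then show "a = b" by (metis lk2 poly_mapping_eqI)
  qed
  moreover have "\<psi> (a + b) = \<psi> a + \<psi> b" for a b
    by (rule poly_mapping_eqI) (simp add: lk lookup_add F_def)
  ultimately show ?thesis by blast
qed

lemma ext_mult:
  fixes f g :: "('v::finite, 'k::field) mpoly"
  assumes "f \<noteq> 0" "g \<noteq> 0"
  shows "\<exists>a\<in>Poly_Mapping.keys f. \<exists>b\<in>Poly_Mapping.keys g. a + b \<in> Poly_Mapping.keys (f * g)"
proof -
  obtain \<psi> :: "('v \<Rightarrow>\<^sub>0 nat) \<Rightarrow> (nat \<Rightarrow>\<^sub>0 nat)" where inj: "inj \<psi>" and add: "\<And>a b. \<psi> (a + b) = \<psi> a + \<psi> b"
    using exists_order_emb by blast
  have nef: "Poly_Mapping.keys f \<noteq> {}" and neg: "Poly_Mapping.keys g \<noteq> {}" using assms by auto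
  obtain a0 where a0: "a0 \<in> Poly_Mapping.keys f" "\<psi> a0 = Max (\<psi> ` Poly_Mapping.keys f)"
  proof -
    have "Max (\<psi> ` Poly_Mapping.keys f) \<in> \<psi> ` Poly_Mapping.keys f"
      by (rule Max_in) (simp_all add: assms)
    then show ?thesis using that by (metis (no_types, lifting) imageE)
  qed
  obtain b0 where b0: "b0 \<in> Poly_Mapping.keys g" "\<psi> b0 = Max (\<psi> ` Poly_Mapping.keys g)"
  proof -
    have "Max (\<psi> ` Poly_Mapping.keys g) \<in> \<psi> ` Poly_Mapping.keys g"
      by (rule Max_in) (simp_all add: assms)
    then show ?thesis using that by (metis (no_types, lifting) imageE)
  qed
  have lea: "\<psi> p \<le> \<psi> a0" if "p \<in> Poly_Mapping.keys f" for p
    using a0(2) that by simp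
  have leb: "\<psi> q \<le> \<psi> b0" if "q \<in> Poly_Mapping.keys g" for q
    using b0(2) that by simp
  have uniq: "p = a0 \<and> q = b0" if "p \<in> Poly_Mapping.keys f" "q \<in> Poly_Mapping.keys g" "p + q = a0 + b0" for p q
  proof -
    have s: "\<psi> p + \<psi> q = \<psi> a0 + \<psi> b0" using that(3) add by metis
    have "\<psi> p = \<psi> a0"
    proof (rule ccontr)
      assume "\<psi> p \<noteq> \<psi> a0"
      then have "\<psi> p < \<psi> a0" using lea[OF that(1)] by simp
      then have "\<psi> p + \<psi> q < \<psi> a0 + \<psi> b0" using leb[OF that(2)] by (rule add_less_le_mono)
      then show False using s by simp
    qed
    then have "p = a0" using inj by (simp add: inj_eq)
    then show ?thesis using that(3) by simp
  qed
  define \<alpha> where "\<alpha> = Poly_Mapping.lookup f a0"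
  define \<beta> where "\<beta> = Poly_Mapping.lookup g b0"
  define f1 where "f1 = f - Poly_Mapping.single a0 \<alpha>"
  define g1 where "g1 = g - Poly_Mapping.single b0 \<beta>"
  have kf1: "Poly_Mapping.keys f1 \<subseteq> Poly_Mapping.keys f - {a0}"
    unfolding f1_def \<alpha>_def by (auto simp: in_keys_iff lookup_minus lookup_single when_def split: if_splits)
  have kg1: "Poly_Mapping.keys g1 \<subseteq> Poly_Mapping.keys g - {b0}"
    unfolding g1_def \<beta>_def by (auto simp: in_keys_iff lookup_minus lookup_single when_def split: if_splits)
  have ka: "Poly_Mapping.keys (Poly_Mapping.single a0 \<alpha>) \<subseteq> {a0}" by simp
  have kb: "Poly_Mapping.keys (Poly_Mapping.single b0 \<beta>) \<subseteq> {b0}" by simp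
  have notin: "a0 + b0 \<notin> Poly_Mapping.keys (x * y)"
    if "Poly_Mapping.keys x \<subseteq> Poly_Mapping.keys f" "Poly_Mapping.keys y \<subseteq> Poly_Mapping.keys g"
       "a0 \<notin> Poly_Mapping.keys x \<or> b0 \<notin> Poly_Mapping.keys y" for x y :: "('v, 'k) mpoly"
  proof
    assume "a0 + b0 \<in> Poly_Mapping.keys (x * y)"
    then obtain p q where "p \<in> Poly_Mapping.keys x" "q \<in> Poly_Mapping.keys y" "a0 + b0 = p + q"
      using keys_mult[of x y] by blast
    then show False using uniq[of p q] that by auto
  qed
  have anz: "\<alpha> \<noteq> 0" and bnz: "\<beta> \<noteq> 0" using a0(1) b0(1) by (auto simp: \<alpha>_def \<beta>_def in_keys_iff)
  have "a0 + b0 \<notin> Poly_Mapping.keys (Poly_Mapping.single a0 \<alpha> * g1)"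
    by (rule notin) (use kg1 a0(1) anz in auto)
  then have z1: "Poly_Mapping.lookup (Poly_Mapping.single a0 \<alpha> * g1) (a0 + b0) = 0"
    by (simp add: in_keys_iff)
  have "a0 + b0 \<notin> Poly_Mapping.keys (f1 * Poly_Mapping.single b0 \<beta>)"
    by (rule notin) (use kf1 b0(1) bnz in auto)
  then have z2: "Poly_Mapping.lookup (f1 * Poly_Mapping.single b0 \<beta>) (a0 + b0) = 0"
    by (simp add: in_keys_iff)
  have "a0 + b0 \<notin> Poly_Mapping.keys (f1 * g1)"
    by (rule notin) (use kf1 kg1 in auto)
  then have z3: "Poly_Mapping.lookup (f1 * g1) (a0 + b0) = 0"
    by (simp add: in_keys_iff)
  have "f * g = (Poly_Mapping.single a0 \<alpha> + f1) * (Poly_Mapping.single b0 \<beta> + g1)"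
    unfolding f1_def g1_def by simp
  also have "\<dots> = Poly_Mapping.single a0 \<alpha> * Poly_Mapping.single b0 \<beta> + Poly_Mapping.single a0 \<alpha> * g1
      + f1 * Poly_Mapping.single b0 \<beta> + f1 * g1"
    by (simp add: algebra_simps)
  finally have "Poly_Mapping.lookup (f * g) (a0 + b0) = \<alpha> * \<beta>"
    using z1 z2 z3 by (simp add: lookup_add mult_single)
  with anz bnz have "a0 + b0 \<in> Poly_Mapping.keys (f * g)" by (simp add: in_keys_iff)
  then show ?thesis using a0(1) b0(1) by blast
qed

lemma mult_nonzero:
  fixes f g :: "('v::finite, 'k::field) mpoly"
  assumes "f \<noteq> 0" "g \<noteq> 0"
  shows "f * g \<noteq> 0"
  using ext_mult[OF assms] by auto

lemma lookup_X_mult: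
  "Poly_Mapping.lookup (X m * f) (m + a) = Poly_Mapping.lookup (f :: ('v, 'k::field) mpoly) a"
proof -
  have "X m * f = X m * (\<Sum>b\<in>Poly_Mapping.keys f. Poly_Mapping.single b (Poly_Mapping.lookup f b))"
    by (subst poly_sum_single[of f]) (rule refl)
  also have "\<dots> = (\<Sum>b\<in>Poly_Mapping.keys f. Poly_Mapping.single (m + b) (Poly_Mapping.lookup f b))"
    by (simp add: sum_distrib_left mult_single)
  finally have "Poly_Mapping.lookup (X m * f) (m + a) =
      (\<Sum>b\<in>Poly_Mapping.keys f. (if b = a then Poly_Mapping.lookup f b else 0))"
    by (simp add: lookup_sum lookup_single when_def)
  also have "\<dots> = Poly_Mapping.lookup f a"
    by (cases "a \<in> Poly_Mapping.keys f") (simp_all add: sum.delta' in_keys_iff)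
  finally show ?thesis .
qed

lemma keys_X_mult:
  "Poly_Mapping.keys (X m * (f :: ('v, 'k::field) mpoly)) = (\<lambda>a. m + a) ` Poly_Mapping.keys f"
proof
  show "Poly_Mapping.keys (X m * f) \<subseteq> (\<lambda>a. m + a) ` Poly_Mapping.keys f"
    using keys_mult[of "X m" f] by auto
  show "(\<lambda>a. m + a) ` Poly_Mapping.keys f \<subseteq> Poly_Mapping.keys (X m * f)"
    using lookup_X_mult[of m f] by (auto simp: in_keys_iff)
qed

lemma X_mult_mon:
  "X m * (f :: ('v, 'k::field) mpoly) \<in> mon E \<longleftrightarrow> (\<forall>a\<in>Poly_Mapping.keys f. m + a \<in> E)"
  by (auto simp: mon_def keys_X_mult)

lemma mult_X_mon:
  "(f :: ('v, 'k::field) mpoly) * X m \<in> mon E \<longleftrightarrow> (\<forall>a\<in>Poly_Mapping.keys f. a + m \<in> E)"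
  by (simp only: mult.commute[of f] X_mult_mon add.commute[of m])

definition res :: "('v \<Rightarrow>\<^sub>0 nat) set \<Rightarrow> ('v, 'k::field) mpoly \<Rightarrow> ('v, 'k) mpoly" where
  "res S f = Abs_poly_mapping (\<lambda>k. if k \<in> S then Poly_Mapping.lookup f k else 0)"

lemma lookup_res: "Poly_Mapping.lookup (res S f) k = (if k \<in> S then Poly_Mapping.lookup f k else 0)"
proof -
  have "finite {k. (if k \<in> S then Poly_Mapping.lookup f k else 0) \<noteq> 0}"
    by (rule finite_subset[of _ "Poly_Mapping.keys f"]) (auto simp: in_keys_iff split: if_splits)
  then show ?thesis unfolding res_def by simp
qed

lemma keys_res: "Poly_Mapping.keys (res S f) = Poly_Mapping.keys f \<inter> S"
  by (auto simp: in_keys_iff lookup_res split: if_splits)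

lemma res_split: "f = res S f + res (- S) f"
  by (rule poly_mapping_eqI) (simp add: lookup_add lookup_res)

subsection \<open>Monomial primes\<close>

definition SA :: "'v set \<Rightarrow> ('v \<Rightarrow>\<^sub>0 nat) set" where
  "SA A = {a. \<exists>i\<in>A. 0 < Poly_Mapping.lookup a i}"

definition PA :: "'v set \<Rightarrow> ('v, 'k::field) mpoly set" where
  "PA A = mon (SA A)"

definition Good :: "('v \<Rightarrow>\<^sub>0 nat) set \<Rightarrow> 'v set \<Rightarrow> ('v \<Rightarrow>\<^sub>0 nat) \<Rightarrow> bool" where
  "Good E A u \<longleftrightarrow> (\<forall>c. u + c \<in> E \<longleftrightarrow> c \<in> SA A)"

lemma upcl_SA: "upcl (SA A)"
  unfolding upcl_def SA_def by (force simp: lookup_add)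

lemma SA_add_iff: "a + b \<in> SA A \<longleftrightarrow> a \<in> SA A \<or> b \<in> SA A"
  unfolding SA_def by (auto simp: lookup_add)

lemma zero_notin_SA: "0 \<notin> SA A"
  unfolding SA_def by simp

lemma PA_ideal: "is_ideal (PA A :: ('v, 'k::field) mpoly set)"
  unfolding PA_def by (rule mon_ideal[OF upcl_SA])

lemma PA_prime: "is_prime_ideal (PA A :: ('v::finite, 'k::field) mpoly set)"
  unfolding is_prime_ideal_def
proof (intro conjI allI impI)
  show "is_ideal (PA A :: ('v, 'k) mpoly set)" by (rule PA_ideal)
  show "PA A \<noteq> (UNIV :: ('v, 'k) mpoly set)"
  proof
    assume "PA A = (UNIV :: ('v, 'k) mpoly set)"
    then have "(1 :: ('v, 'k) mpoly) \<in> PA A" by simp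
    then show False by (simp add: PA_def mon_def zero_notin_SA)
  qed
  fix a b :: "('v, 'k) mpoly"
  assume ab: "a * b \<in> PA A"
  show "a \<in> PA A \<or> b \<in> PA A"
  proof (rule ccontr)
    assume "\<not> (a \<in> PA A \<or> b \<in> PA A)"
    then have na: "a \<notin> PA A" and nb: "b \<notin> PA A" by auto
    define a0 where "a0 = res (- SA A) a"
    define a1 where "a1 = res (SA A) a"
    define b0 where "b0 = res (- SA A) b"
    define b1 where "b1 = res (SA A) b"
    have a1P: "a1 \<in> PA A" and b1P: "b1 \<in> PA A"
      unfolding a1_def b1_def PA_def mon_def by (auto simp: keys_res)
    have a0nz: "a0 \<noteq> 0"
    proof
      assume "a0 = 0"
      then have "a = a1" using res_split[of a "SA A"] unfolding a0_def a1_def by simp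
      then show False using na a1P by simp
    qed
    have b0nz: "b0 \<noteq> 0"
    proof
      assume "b0 = 0"
      then have "b = b1" using res_split[of b "SA A"] unfolding b0_def b1_def by simp
      then show False using nb b1P by simp
    qed
    have ea: "a = a1 + a0" and eb: "b = b1 + b0"
      using res_split[of a "SA A"] res_split[of b "SA A"] unfolding a0_def a1_def b0_def b1_def by simp_all
    have "a0 * b0 = a * b - (a1 * b + a0 * b1)"
      by (simp add: ea eb algebra_simps)
    moreover have "a1 * b + a0 * b1 \<in> PA A"
      using PA_ideal a1P b1P by (meson ideal_add ideal_mult ideal_mult2)
    ultimately have "a0 * b0 \<in> PA A" using ab PA_ideal by (metis ideal_diff)
    then have k1: "Poly_Mapping.keys (a0 * b0) \<subseteq> SA A" by (simp add: PA_def mon_def)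
    have "Poly_Mapping.keys (a0 * b0) \<subseteq> - SA A"
    proof
      fix x assume "x \<in> Poly_Mapping.keys (a0 * b0)"
      then obtain p q where "p \<in> Poly_Mapping.keys a0" "q \<in> Poly_Mapping.keys b0" "x = p + q"
        using keys_mult[of a0 b0] by blast
      then show "x \<in> - SA A" unfolding a0_def b0_def by (auto simp: keys_res SA_add_iff)
    qed
    with k1 have "Poly_Mapping.keys (a0 * b0) = {}" by blast
    then have "a0 * b0 = 0" by simp
    then show False using mult_nonzero[OF a0nz b0nz] by simp
  qed
qed

lemma good_ass:
  assumes "upcl E" "Good E A u"
  shows "(PA A :: ('v::finite, 'k::field) mpoly set) \<in> Ass (mon E)"
  unfolding Ass_def
proof (intro CollectI conjI exI)
  show "is_prime_ideal (PA A :: ('v, 'k) mpoly set)" by (rule PA_prime)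
  show "(PA A :: ('v, 'k) mpoly set) = {r. r * X u \<in> mon E}"
  proof -
    have "\<forall>a. a + u \<in> E \<longleftrightarrow> a \<in> SA A" using assms(2) by (simp add: Good_def add.commute)
    then show ?thesis by (auto simp: PA_def mon_def[of "SA A"] mult_X_mon)
  qed
qed

subsection \<open>Associated primes of monomial ideals are monomial primes\<close>

definition dg :: "('v::finite \<Rightarrow>\<^sub>0 nat) \<Rightarrow> nat" where
  "dg m = (\<Sum>v\<in>UNIV. Poly_Mapping.lookup m v)"

lemma dg_add: "dg (a + b) = dg a + dg b"
  by (simp add: dg_def lookup_add sum.distrib)

lemma dg_single: "dg (Poly_Mapping.single (i::'v::finite) (1::nat)) = 1"
  by (simp add: dg_def lookup_single when_def)

lemma dg_zero: "dg m = 0 \<Longrightarrow> m = 0"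
  by (rule poly_mapping_eqI) (simp add: dg_def)

lemma split_var:
  fixes m :: "'v \<Rightarrow>\<^sub>0 nat"
  assumes "0 < Poly_Mapping.lookup m i"
  shows "m = Poly_Mapping.single i 1 + (m - Poly_Mapping.single i 1)"
  using assms by (intro poly_mapping_eqI) (auto simp: lookup_add lookup_minus lookup_single when_def)

lemma prime_one_notin:
  assumes "is_prime_ideal P"
  shows "1 \<notin> P"
proof
  assume "1 \<in> P"
  then have "r \<in> P" for r using ideal_mult[of P 1 r] assms unfolding is_prime_ideal_def by simp
  then show False using assms unfolding is_prime_ideal_def by auto
qed

lemma prime_mon_exps:
  fixes P :: "('v::finite, 'k::field) mpoly set"
  assumes P: "is_prime_ideal P"
  defines "A \<equiv> {i. X (Poly_Mapping.single i 1) \<in> P}"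
  shows "X m \<in> P \<longleftrightarrow> m \<in> SA A"
proof
  have idl: "is_ideal P" using P unfolding is_prime_ideal_def by simp
  assume "m \<in> SA A"
  then obtain i where i: "i \<in> A" "0 < Poly_Mapping.lookup m i" unfolding SA_def by auto
  then have "X m = X (m - Poly_Mapping.single i 1) * (X (Poly_Mapping.single i 1) :: ('v, 'k) mpoly)"
    by (subst split_var[OF i(2)]) (simp add: mult_single add.commute)
  then show "X m \<in> P" using i(1) ideal_mult[OF idl] unfolding A_def by simp
next
  show "X m \<in> P \<Longrightarrow> m \<in> SA A"
  proof (induction "dg m" arbitrary: m rule: less_induct)
    case less
    show ?case
    proof (cases "m = 0")
      case True
      then show ?thesis using less.prems prime_one_notin[OF P] by simp
    next
      case False
      then obtain i where i: "0 < Poly_Mapping.lookup m i"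
        by (metis neq0_conv poly_mapping_eqI lookup_zero)
      define m' where "m' = m - Poly_Mapping.single i 1"
      have em: "m = Poly_Mapping.single i 1 + m'" unfolding m'_def by (rule split_var[OF i])
      have "X m = X (Poly_Mapping.single i 1) * (X m' :: ('v, 'k) mpoly)"
        by (subst em) (simp add: mult_single)
      then have "X (Poly_Mapping.single i 1) * (X m' :: ('v, 'k) mpoly) \<in> P" using less.prems by simp
      then have "X (Poly_Mapping.single i 1) \<in> P \<or> (X m' :: ('v, 'k) mpoly) \<in> P"
        using P unfolding is_prime_ideal_def by blast
      then show ?thesis
      proof
        assume "X (Poly_Mapping.single i 1) \<in> P"
        then have "i \<in> A" unfolding A_def by simp
        then show ?thesis using i unfolding SA_def by auto
      next
        assume "(X m' :: ('v, 'k) mpoly) \<in> P"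
        moreover have "dg m' < dg m" using em dg_add[of "Poly_Mapping.single i 1" m'] dg_single[of i] by simp
        ultimately have "m' \<in> SA A" using less.hyps by blast
        then show ?thesis using em SA_add_iff by metis
      qed
    qed
  qed
qed

lemma ann_ideal:
  assumes "is_ideal J"
  shows "is_ideal {r. r * f \<in> J}"
  using assms unfolding is_ideal_def by (auto simp: distrib_right mult.assoc)

lemma ass_good_aux:
  fixes f :: "('v::finite, 'k::field) mpoly"
  assumes E: "upcl E"
    and P: "is_prime_ideal P" "P = {r. r * f \<in> mon E}"
  shows "\<exists>A u. Good E A u \<and> P = PA A"
  using P
proof (induction "card (Poly_Mapping.keys f)" arbitrary: f rule: less_induct)
  case less
  have prime: "is_prime_ideal P" and Pf: "P = {r. r * f \<in> mon E}" using less.prems by auto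
  have idl: "is_ideal P" using prime unfolding is_prime_ideal_def by simp
  have J: "is_ideal (mon E :: ('v, 'k) mpoly set)" by (rule mon_ideal[OF E])
  define A where "A = {i. (X (Poly_Mapping.single i 1) :: ('v, 'k) mpoly) \<in> P}"
  have fact3: "(X m :: ('v, 'k) mpoly) \<in> P \<longleftrightarrow> m \<in> SA A" for m
    unfolding A_def by (rule prime_mon_exps[OF prime])
  have fact1: "(X m :: ('v, 'k) mpoly) \<in> P \<longleftrightarrow> (\<forall>a\<in>Poly_Mapping.keys f. m + a \<in> E)" for m
    using Pf X_mult_mon by blast
  have fnz: "f \<noteq> 0"
  proof
    assume "f = 0"
    then have "(1 :: ('v, 'k) mpoly) \<in> P" using Pf ideal_zero[OF J] by simp
    then show False using prime_one_notin[OF prime] by simp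
  qed
  have "\<exists>u\<in>Poly_Mapping.keys f. Good E A u"
  proof (rule ccontr)
    assume ng: "\<not> (\<exists>u\<in>Poly_Mapping.keys f. Good E A u)"
    have "\<forall>a\<in>Poly_Mapping.keys f. \<exists>c. a + c \<in> E \<and> c \<notin> SA A"
    proof (intro ballI)
      fix a assume a: "a \<in> Poly_Mapping.keys f"
      then have "\<not> Good E A a" using ng by blast
      then obtain c where "\<not> (a + c \<in> E \<longleftrightarrow> c \<in> SA A)" unfolding Good_def by blast
      moreover have "c \<in> SA A \<Longrightarrow> a + c \<in> E" using fact1 fact3 a by (simp add: add.commute)
      ultimately show "\<exists>c. a + c \<in> E \<and> c \<notin> SA A" by blast
    qed
    then obtain C where C': "\<forall>a\<in>Poly_Mapping.keys f. a + C a \<in> E \<and> C a \<notin> SA A"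
      by (rule bchoice[THEN exE])
    then have C: "\<And>a. a \<in> Poly_Mapping.keys f \<Longrightarrow> a + C a \<in> E \<and> C a \<notin> SA A" by blast
    define T where "T = (\<Sum>a\<in>Poly_Mapping.keys f. C a)"
    have "T \<notin> SA A"
    proof
      assume "T \<in> SA A"
      then obtain i where "i \<in> A" "0 < Poly_Mapping.lookup T i" unfolding SA_def by auto
      have "\<exists>a\<in>Poly_Mapping.keys f. 0 < Poly_Mapping.lookup (C a) i"
      proof (rule ccontr)
        assume "\<not> (\<exists>a\<in>Poly_Mapping.keys f. 0 < Poly_Mapping.lookup (C a) i)"
        then have "\<forall>a\<in>Poly_Mapping.keys f. Poly_Mapping.lookup (C a) i = 0" by simp
        then have "Poly_Mapping.lookup T i = 0" unfolding T_def lookup_sum by simp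
        then show False using \<open>0 < Poly_Mapping.lookup T i\<close> by simp
      qed
      then obtain a where "a \<in> Poly_Mapping.keys f" "0 < Poly_Mapping.lookup (C a) i" by blast
      then show False using C \<open>i \<in> A\<close> unfolding SA_def by auto
    qed
    moreover have "T + a \<in> E" if a: "a \<in> Poly_Mapping.keys f" for a
    proof -
      have "T = C a + (\<Sum>b\<in>Poly_Mapping.keys f - {a}. C b)"
        unfolding T_def using a by (simp add: sum.remove)
      then have "T + a = (a + C a) + (\<Sum>b\<in>Poly_Mapping.keys f - {a}. C b)"
        by (simp add: algebra_simps)
      moreover have "(a + C a) + (\<Sum>b\<in>Poly_Mapping.keys f - {a}. C b) \<in> E"
        using C[OF a] E unfolding upcl_def by blast
      ultimately show ?thesis by simp
    qed
    ultimately show False using fact1 fact3 by blast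
  qed
  then obtain u where u: "u \<in> Poly_Mapping.keys f" "Good E A u" by blast
  have PAP: "PA A \<subseteq> P"
  proof
    fix r :: "('v, 'k) mpoly" assume r: "r \<in> PA A"
    have "Poly_Mapping.keys (r * f) \<subseteq> E"
    proof
      fix x assume "x \<in> Poly_Mapping.keys (r * f)"
      then obtain p q where pq: "p \<in> Poly_Mapping.keys r" "q \<in> Poly_Mapping.keys f" "x = p + q"
        using keys_mult[of r f] by blast
      then have "p \<in> SA A" using r unfolding PA_def mon_def by auto
      then show "x \<in> E" using fact1 fact3 pq by blast
    qed
    then show "r \<in> P" using Pf by (simp add: mon_def)
  qed
  show ?case
  proof (cases "P \<subseteq> PA A")
    case True
    then show ?thesis using PAP u(2) by blast
  next
    case False
    then obtain g where g: "g \<in> P" "g \<notin> PA A" by blast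
    define g1 where "g1 = res (SA A) g"
    define g0 where "g0 = res (- SA A) g"
    have g1PA: "g1 \<in> PA A" unfolding g1_def PA_def mon_def by (auto simp: keys_res)
    then have g1P: "g1 \<in> P" using PAP by blast
    have eg: "g = g1 + g0" unfolding g1_def g0_def by (rule res_split)
    have g0P: "g0 \<in> P" using ideal_diff[OF idl g(1) g1P] eg by simp
    have g0nz: "g0 \<noteq> 0" using eg g g1PA by auto
    obtain a b where ab: "a \<in> Poly_Mapping.keys g0" "b \<in> Poly_Mapping.keys f"
      "a + b \<in> Poly_Mapping.keys (g0 * f)"
      using ext_mult[OF g0nz fnz] by blast
    have "g0 * f \<in> mon E" using g0P Pf by simp
    then have abE: "a + b \<in> E" using ab(3) unfolding mon_def by blast
    have "a \<notin> SA A" using ab(1) unfolding g0_def by (simp add: keys_res)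
    then have XaP: "(X a :: ('v, 'k) mpoly) \<notin> P" using fact3 by simp
    define c where "c = Poly_Mapping.lookup f b"
    define f2 where "f2 = X a * f - Poly_Mapping.single (a + b) c"
    have P2r: "r \<in> P \<longleftrightarrow> r * f2 \<in> mon E" for r :: "('v, 'k) mpoly"
    proof
      have sE: "r * Poly_Mapping.single (a + b) c \<in> mon E"
      proof -
        have "Poly_Mapping.single (a + b) c \<in> (mon E :: ('v, 'k) mpoly set)"
          using abE by (simp add: mon_def)
        then show ?thesis by (rule ideal_mult[OF J])
      qed
      have e2: "r * f2 = (r * X a) * f - r * Poly_Mapping.single (a + b) c"
        unfolding f2_def by (simp add: algebra_simps)
      show "r * f2 \<in> mon E" if "r \<in> P"
      proof -
        have "r * X a \<in> P" using that by (rule ideal_mult2[OF idl])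
        then have "(r * X a) * f \<in> mon E" using Pf by simp
        then show "r * f2 \<in> mon E" using e2 sE ideal_diff[OF J] by simp
      qed
      show "r \<in> P" if "r * f2 \<in> mon E"
      proof -
        have "(r * X a) * f = r * f2 + r * Poly_Mapping.single (a + b) c" using e2 by simp
        then have "(r * X a) * f \<in> mon E" using ideal_add[OF J that sE] by simp
        then have "r * X a \<in> P" using Pf by simp
        then show "r \<in> P" using XaP prime unfolding is_prime_ideal_def by blast
      qed
    qed
    then have P2: "P = {r. r * f2 \<in> mon E}" by blast
    have kf2: "Poly_Mapping.keys f2 \<subseteq> Poly_Mapping.keys (X a * f) - {a + b}"
    proof
      fix x assume x: "x \<in> Poly_Mapping.keys f2"
      have "Poly_Mapping.lookup (X a * f) (a + b) = c" unfolding c_def by (rule lookup_X_mult)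
      then show "x \<in> Poly_Mapping.keys (X a * f) - {a + b}"
        using x unfolding f2_def by (auto simp: in_keys_iff lookup_minus lookup_single when_def split: if_splits)
    qed
    have "a + b \<in> Poly_Mapping.keys (X a * f)" using ab(2) by (simp add: keys_X_mult)
    have "card (Poly_Mapping.keys f2) < card (Poly_Mapping.keys (X a * f))"
    proof (rule psubset_card_mono)
      show "finite (Poly_Mapping.keys (X a * f))" by simp
      show "Poly_Mapping.keys f2 \<subset> Poly_Mapping.keys (X a * f)"
        using kf2 \<open>a + b \<in> Poly_Mapping.keys (X a * f)\<close> by blast
    qed
    also have "\<dots> \<le> card (Poly_Mapping.keys f)" unfolding keys_X_mult by (rule card_image_le) simp
    finally have "card (Poly_Mapping.keys f2) < card (Poly_Mapping.keys f)" .
    then show ?thesis using less.hyps[of f2] prime P2 by blast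
  qed
qed

lemma Ass_mon:
  assumes "upcl E"
  shows "Ass (mon E :: ('v::finite, 'k::field) mpoly set) = {PA A | A. \<exists>u. Good E A u}"
proof
  show "Ass (mon E :: ('v, 'k) mpoly set) \<subseteq> {PA A | A. \<exists>u. Good E A u}"
  proof
    fix P :: "('v, 'k) mpoly set" assume "P \<in> Ass (mon E)"
    then obtain f where "is_prime_ideal P" "P = {r. r * f \<in> mon E}" unfolding Ass_def by blast
    then show "P \<in> {PA A | A. \<exists>u. Good E A u}" using ass_good_aux[OF assms] by blast
  qed
  show "{PA A | A. \<exists>u. Good E A u} \<subseteq> Ass (mon E :: ('v, 'k) mpoly set)"
    using good_ass[OF assms] by blast
qed

subsection \<open>Weights\<close>

lemma lookup_Abs_fin: "Poly_Mapping.lookup (Abs_poly_mapping (g :: 'v::finite \<Rightarrow> nat)) = g"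
  by simp

lemma lookup_W: "Poly_Mapping.lookup (weight_exp w a) v = w v * Poly_Mapping.lookup (a :: 'v::finite \<Rightarrow>\<^sub>0 nat) v"
  by (simp add: weight_exp_def)

lemma W_add: "weight_exp w (a + b) = weight_exp w a + weight_exp w (b :: 'v::finite \<Rightarrow>\<^sub>0 nat)"
  by (rule poly_mapping_eqI) (simp add: lookup_W lookup_add algebra_simps)

lemma W_zero: "weight_exp w (0 :: 'v::finite \<Rightarrow>\<^sub>0 nat) = 0"
  by (rule poly_mapping_eqI) (simp add: lookup_W)

definition Dv :: "('v \<Rightarrow> nat) \<Rightarrow> ('v::finite \<Rightarrow>\<^sub>0 nat) \<Rightarrow> ('v \<Rightarrow>\<^sub>0 nat)" where
  "Dv w e = Abs_poly_mapping (\<lambda>v. Poly_Mapping.lookup e v div w v)"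

lemma lookup_Dv: "Poly_Mapping.lookup (Dv w e) v = Poly_Mapping.lookup e v div w v"
  by (simp add: Dv_def)

lemma le_decomp:
  fixes a b :: "'v \<Rightarrow>\<^sub>0 nat"
  assumes "\<And>v. Poly_Mapping.lookup b v \<le> Poly_Mapping.lookup a v"
  shows "a = b + (a - b)"
  using assms by (intro poly_mapping_eqI) (simp add: lookup_add lookup_minus)

lemma in_up_le:
  fixes a b :: "'v \<Rightarrow>\<^sub>0 nat"
  assumes "\<And>v. Poly_Mapping.lookup b v \<le> Poly_Mapping.lookup a v" "b \<in> S"
  shows "a \<in> up S"
  unfolding up_def using le_decomp[OF assms(1)] assms(2) by blast

lemma up_iff_Dv:
  fixes E :: "('v::finite \<Rightarrow>\<^sub>0 nat) set"
  assumes E: "upcl E" and w: "\<forall>v. 0 < w v"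
  shows "e \<in> up (weight_exp w ` E) \<longleftrightarrow> Dv w e \<in> E"
proof
  assume "e \<in> up (weight_exp w ` E)"
  then obtain a c where a: "a \<in> E" "e = weight_exp w a + c" unfolding up_def by auto
  have "Dv w e = a + Dv w c"
  proof (rule poly_mapping_eqI)
    fix v
    have "(w v * Poly_Mapping.lookup a v + Poly_Mapping.lookup c v) div w v
        = Poly_Mapping.lookup a v + Poly_Mapping.lookup c v div w v"
      using w by (simp add: mult.commute)
    then show "Poly_Mapping.lookup (Dv w e) v = Poly_Mapping.lookup (a + Dv w c) v"
      by (simp add: a(2) lookup_Dv lookup_add lookup_W)
  qed
  then show "Dv w e \<in> E" using E a(1) unfolding upcl_def by simp
next
  assume d: "Dv w e \<in> E"
  have "\<And>v. Poly_Mapping.lookup (weight_exp w (Dv w e)) v \<le> Poly_Mapping.lookup e v"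
    by (simp add: lookup_W lookup_Dv)
  moreover have "weight_exp w (Dv w e) \<in> weight_exp w ` E" using d by simp
  ultimately show "e \<in> up (weight_exp w ` E)" by (rule in_up_le)
qed

lemma good_weight:
  fixes E :: "('v::finite \<Rightarrow>\<^sub>0 nat) set"
  assumes E: "upcl E" and w: "\<forall>v. 0 < w v"
  shows "(\<exists>u. Good E A u) \<longleftrightarrow> (\<exists>u. Good (up (weight_exp w ` E)) A u)"
proof
  assume "\<exists>u. Good E A u"
  then obtain u where u: "Good E A u" by blast
  define R where "R = Abs_poly_mapping (\<lambda>i. if i \<in> A then w i - 1 else 0 :: nat)"
  have lR: "Poly_Mapping.lookup R i = (if i \<in> A then w i - 1 else 0)" for i
    by (simp add: R_def)
  define v where "v = weight_exp w u + R"
  have "Good (up (weight_exp w ` E)) A v"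
    unfolding Good_def
  proof
    fix c
    have eD: "Dv w (v + c) = u + Dv w (R + c)"
    proof (rule poly_mapping_eqI)
      fix i
      have "(w i * Poly_Mapping.lookup u i + (Poly_Mapping.lookup R i + Poly_Mapping.lookup c i)) div w i
          = Poly_Mapping.lookup u i + (Poly_Mapping.lookup R i + Poly_Mapping.lookup c i) div w i"
        using w by (simp add: mult.commute)
      then show "Poly_Mapping.lookup (Dv w (v + c)) i = Poly_Mapping.lookup (u + Dv w (R + c)) i"
        by (simp add: v_def lookup_Dv lookup_add lookup_W add.assoc)
    qed
    have key: "Dv w (R + c) \<in> SA A \<longleftrightarrow> c \<in> SA A"
    proof -
      have "0 < (w i - 1 + Poly_Mapping.lookup c i) div w i \<longleftrightarrow> 0 < Poly_Mapping.lookup c i" for i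
      proof -
        have "0 < (w i - 1 + Poly_Mapping.lookup c i) div w i \<longleftrightarrow> w i \<le> w i - 1 + Poly_Mapping.lookup c i"
          using w by (simp add: div_greater_zero_iff)
        also have "\<dots> \<longleftrightarrow> 0 < Poly_Mapping.lookup c i" using w[rule_format, of i] by linarith
        finally show ?thesis .
      qed
      then show ?thesis unfolding SA_def by (auto simp: lookup_Dv lookup_add lR)
    qed
    have "v + c \<in> up (weight_exp w ` E) \<longleftrightarrow> u + Dv w (R + c) \<in> E"
      using up_iff_Dv[OF E w] eD by simp
    also have "\<dots> \<longleftrightarrow> c \<in> SA A" using u key unfolding Good_def by simp
    finally show "v + c \<in> up (weight_exp w ` E) \<longleftrightarrow> c \<in> SA A" .
  qed
  then show "\<exists>u. Good (up (weight_exp w ` E)) A u" by blast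
next
  assume "\<exists>u. Good (up (weight_exp w ` E)) A u"
  then obtain v where v: "Good (up (weight_exp w ` E)) A v" by blast
  have "Good E A (Dv w v)"
    unfolding Good_def
  proof
    fix c
    have eD: "Dv w (v + weight_exp w c) = Dv w v + c"
    proof (rule poly_mapping_eqI)
      fix i
      have "(Poly_Mapping.lookup v i + w i * Poly_Mapping.lookup c i) div w i
          = Poly_Mapping.lookup v i div w i + Poly_Mapping.lookup c i"
        using w by (simp add: mult.commute)
      then show "Poly_Mapping.lookup (Dv w (v + weight_exp w c)) i = Poly_Mapping.lookup (Dv w v + c) i"
        by (simp add: lookup_Dv lookup_add lookup_W)
    qed
    have key: "weight_exp w c \<in> SA A \<longleftrightarrow> c \<in> SA A"
      using w unfolding SA_def by (auto simp: lookup_W)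
    have "Dv w v + c \<in> E \<longleftrightarrow> v + weight_exp w c \<in> up (weight_exp w ` E)"
      using up_iff_Dv[OF E w] eD by simp
    also have "\<dots> \<longleftrightarrow> c \<in> SA A" using v key unfolding Good_def by simp
    finally show "Dv w v + c \<in> E \<longleftrightarrow> c \<in> SA A" .
  qed
  then show "\<exists>u. Good E A u" by blast
qed

lemma Ass_weight:
  fixes E :: "('v::finite \<Rightarrow>\<^sub>0 nat) set"
  assumes E: "upcl E" and w: "\<forall>v. 0 < w v"
  shows "Ass (mon (up (weight_exp w ` E)) :: ('v, 'k::field) mpoly set) = Ass (mon E)"
proof -
  have 1: "Ass (mon E :: ('v, 'k) mpoly set) = {PA A | A. \<exists>u. Good E A u}" by (rule Ass_mon[OF E])
  have 2: "Ass (mon (up (weight_exp w ` E)) :: ('v, 'k) mpoly set)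
      = {PA A | A. \<exists>u. Good (up (weight_exp w ` E)) A u}" by (rule Ass_mon[OF upcl_up])
  show ?thesis unfolding 1 2 using good_weight[OF E w] by simp
qed

lemma mon_UNIV: "mon UNIV = UNIV"
  by (simp add: mon_def)

lemma upcl_UNIV: "upcl UNIV"
  by (simp add: upcl_def)

primrec pw :: "('v \<Rightarrow>\<^sub>0 nat) set \<Rightarrow> nat \<Rightarrow> ('v \<Rightarrow>\<^sub>0 nat) set" where
  "pw E 0 = UNIV"
| "pw E (Suc k) = psum (pw E k) E"

lemma upcl_pw: "upcl E \<Longrightarrow> upcl (pw E k)"
  by (induction k) (simp_all add: upcl_UNIV upcl_psum)

lemma ideal_pow_mon:
  assumes "upcl E"
  shows "ideal_pow (mon E :: ('v, 'k::field) mpoly set) k = mon (pw E k)"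
  by (induction k) (simp_all add: mon_UNIV ideal_prod_mon assms upcl_pw)

lemma up_W_psum:
  fixes P E :: "('v::finite \<Rightarrow>\<^sub>0 nat) set"
  shows "up (weight_exp w ` psum P E) = psum (up (weight_exp w ` P)) (up (weight_exp w ` E))"
proof
  show "up (weight_exp w ` psum P E) \<subseteq> psum (up (weight_exp w ` P)) (up (weight_exp w ` E))"
  proof
    fix x assume "x \<in> up (weight_exp w ` psum P E)"
    then obtain p e c where pe: "p \<in> P" "e \<in> E" "x = weight_exp w (p + e) + c"
      unfolding up_def psum_def by auto
    have "weight_exp w p + c \<in> up (weight_exp w ` P)" using pe(1) unfolding up_def by blast
    moreover have "weight_exp w e + 0 \<in> up (weight_exp w ` E)" using pe(2) unfolding up_def by blast
    moreover have "x = (weight_exp w p + c) + (weight_exp w e + 0)" using pe(3) by (simp add: W_add algebra_simps)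
    ultimately show "x \<in> psum (up (weight_exp w ` P)) (up (weight_exp w ` E))" unfolding psum_def by blast
  qed
  show "psum (up (weight_exp w ` P)) (up (weight_exp w ` E)) \<subseteq> up (weight_exp w ` psum P E)"
  proof
    fix x assume "x \<in> psum (up (weight_exp w ` P)) (up (weight_exp w ` E))"
    then obtain p e c1 c2 where pe: "p \<in> P" "e \<in> E" "x = (weight_exp w p + c1) + (weight_exp w e + c2)"
      unfolding up_def psum_def by auto
    have "p + e \<in> psum P E" using pe unfolding psum_def by blast
    moreover have "x = weight_exp w (p + e) + (c1 + c2)" using pe(3) by (simp add: W_add algebra_simps)
    ultimately show "x \<in> up (weight_exp w ` psum P E)" unfolding up_def by blast
  qed
qed

lemma up_W_UNIV: "up (weight_exp w ` (UNIV :: ('v::finite \<Rightarrow>\<^sub>0 nat) set)) = UNIV"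
proof -
  have z: "(0::'v \<Rightarrow>\<^sub>0 nat) \<in> weight_exp w ` UNIV"
    by (rule image_eqI[of _ _ 0]) (simp_all add: W_zero)
  have "x \<in> up (weight_exp w ` UNIV)" for x :: "'v \<Rightarrow>\<^sub>0 nat"
    unfolding up_def using z by (intro CollectI exI[of _ "0::'v \<Rightarrow>\<^sub>0 nat"] exI[of _ x] conjI) simp_all
  then show ?thesis by blast
qed

lemma up_W_pw:
  fixes E :: "('v::finite \<Rightarrow>\<^sub>0 nat) set"
  shows "up (weight_exp w ` pw E k) = pw (up (weight_exp w ` E)) k"
  by (induction k) (simp_all add: up_W_UNIV up_W_psum)

lemma monomial_ideal_mon:
  fixes I :: "('v, 'k::field) mpoly set"
  assumes "is_monomial_ideal I"
  defines "E \<equiv> {a. X a \<in> I}"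
  shows "I = mon E" "upcl E"
proof -
  have idl: "is_ideal I" using assms(1) unfolding is_monomial_ideal_def by simp
  have "I \<inter> monomials = X ` E" unfolding monomials_def E_def by auto
  then have "I = ideal_gen (X ` E)" using assms(1) unfolding is_monomial_ideal_def by simp
  then have I: "I = mon (up E)" by (simp add: ideal_gen_X)
  show ue: "upcl E"
    unfolding upcl_def
  proof (intro ballI allI)
    fix a c assume "a \<in> E"
    then have "X c * X a \<in> I" unfolding E_def by (simp add: ideal_mult[OF idl])
    then show "a + c \<in> E" unfolding E_def by (simp add: mult_single add.commute)
  qed
  show "I = mon E" using I up_upcl[OF ue] by simp
qed

lemma exists_min_gen:
  fixes I :: "('v::finite, 'k::field) mpoly set"
  assumes "X a \<in> I"
  shows "\<exists>g\<in>min_mon_gens I. \<forall>v. Poly_Mapping.lookup g v \<le> Poly_Mapping.lookup a v"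
proof -
  let ?S = "\<lambda>b. X b \<in> I \<and> (\<forall>v. Poly_Mapping.lookup b v \<le> Poly_Mapping.lookup a v)"
  obtain g where g: "?S g" and gmin: "\<And>b. ?S b \<Longrightarrow> dg g \<le> dg b"
    using ex_has_least_nat[of ?S a dg] assms by auto
  have "g \<in> min_mon_gens I"
    unfolding min_mon_gens_def
  proof (intro CollectI conjI allI impI)
    show "X g \<in> I" using g by simp
    fix b assume b: "X b \<in> I \<and> (\<forall>v. Poly_Mapping.lookup b v \<le> Poly_Mapping.lookup g v)"
    then have "?S b" using g by (meson order_trans)
    then have "dg g \<le> dg b" by (rule gmin)
    have eg: "g = b + (g - b)" using b by (intro le_decomp) blast
    then have "dg g = dg b + dg (g - b)" by (metis dg_add)
    with \<open>dg g \<le> dg b\<close> have "dg (g - b) = 0" by simp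
    then have "g - b = 0" by (rule dg_zero)
    then show "b = g" using eg by simp
  qed
  then show ?thesis using g by blast
qed

lemma weighted_ideal_mon:
  fixes I :: "('v::finite, 'k::field) mpoly set"
  assumes "is_monomial_ideal I"
  shows "weighted_ideal w I = mon (up (weight_exp w ` {a. X a \<in> I}))"
proof -
  let ?E = "{a. (X a :: ('v, 'k) mpoly) \<in> I}"
  have G: "min_mon_gens I \<subseteq> ?E" unfolding min_mon_gens_def by auto
  have "up (weight_exp w ` min_mon_gens I) = up (weight_exp w ` ?E)"
  proof
    show "up (weight_exp w ` min_mon_gens I) \<subseteq> up (weight_exp w ` ?E)"
      using G unfolding up_def by blast
    show "up (weight_exp w ` ?E) \<subseteq> up (weight_exp w ` min_mon_gens I)"
    proof
      fix x assume "x \<in> up (weight_exp w ` ?E)"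
      then obtain a c where a: "X a \<in> I" "x = weight_exp w a + c" unfolding up_def by auto
      obtain g where g: "g \<in> min_mon_gens I" "\<forall>v. Poly_Mapping.lookup g v \<le> Poly_Mapping.lookup a v"
        using exists_min_gen[OF a(1)] by blast
      have "a = g + (a - g)" using g(2) by (intro le_decomp) blast
      then have "x = weight_exp w g + (weight_exp w (a - g) + c)" using a(2) by (metis W_add add.assoc)
      then show "x \<in> up (weight_exp w ` min_mon_gens I)" using g(1) unfolding up_def by blast
    qed
  qed
  moreover have "weighted_ideal w I = ideal_gen (X ` (weight_exp w ` min_mon_gens I))"
    unfolding weighted_ideal_def by (simp add: image_image)
  ultimately show ?thesis by (simp add: ideal_gen_X)
qed

theorem theorem3p14:
  fixes I :: "('v::finite, 'k::field) mpoly set" and w :: "'v \<Rightarrow> nat"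
  assumes "is_monomial_ideal I"
    and "\<forall>v. w v > 0"
  shows "copersistent I \<longleftrightarrow> copersistent (weighted_ideal w I)"
proof -
  define E where "E = {a. (X a :: ('v, 'k) mpoly) \<in> I}"
  have IE: "I = mon E" and E: "upcl E" using monomial_ideal_mon[OF assms(1)] unfolding E_def by auto
  have IW: "weighted_ideal w I = mon (up (weight_exp w ` E))"
    unfolding E_def by (rule weighted_ideal_mon[OF assms(1)])
  have "Ass (ideal_pow (weighted_ideal w I) k) = Ass (ideal_pow I k)" for k
  proof -
    have "Ass (ideal_pow (weighted_ideal w I) k) = Ass (mon (pw (up (weight_exp w ` E)) k) :: ('v, 'k) mpoly set)"
      unfolding IW by (simp add: ideal_pow_mon upcl_up)
    also have "\<dots> = Ass (mon (up (weight_exp w ` pw E k)) :: ('v, 'k) mpoly set)"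
      by (simp add: up_W_pw)
    also have "\<dots> = Ass (mon (pw E k) :: ('v, 'k) mpoly set)"
      by (rule Ass_weight[OF upcl_pw[OF E] assms(2)])
    also have "\<dots> = Ass (ideal_pow I k)"
      unfolding IE by (simp add: ideal_pow_mon E)
    finally show ?thesis .
  qed
  then show ?thesis unfolding copersistent_def by (simp only:)
qed

end
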